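(* Let $\mathcal{U}$ be a selective nonprincipal ultrafilter on $\mathbb{N}$ and let $X$ be a reflexive Banach space. Let $(x_n)_{n\ge1}$ be a bounded sequence in $X$ and $(x_n^{*})_{n\ge1}$ a bounded sequence in $X^{*}$ with $(x_n)_{n,\mathcal{U}}\in\widehat{X}$ and $(x_n^{*})_{n,\mathcal{U}}\in\widehat{X^{*}}$. Assume that for every $x\in X$ the series $\sum_{i=1}^{\infty}x_i^{*}(x)x_i$ converges unconditionally. For $A\in\mathcal{U}$ let $T_A\in B(X)$ be $T_Ax=\sum_{i\in A}x_i^{*}(x)x_i$. Then, regarding $\mathcal{U}$ as a net directed by reverse inclusion, $T_A^{\mathcal{U}}\to (x_n)_{n,\mathcal{U}}\otimes(x_n^{*})_{n,\mathcal{U}}$ in the strong operator topology of $B(X^{\mathcal{U}})$, where $(x_n)_{n,\mathcal{U}}\otimes(x_n^{*})_{n,\mathcal{U}}$ is the rank one operator $(y_n)_{n,\mathcal{U}}\mapsto\big(\lim_{n,\mathcal{U}}x_n^{*}(y_n)\big)(x_n)_{n,\mathcal{U}}$ on $X^{\mathcal{U}}$.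
   Context: For a Banach space $X$, $X^{\mathcal{U}}$ is the ultrapower (bounded sequences modulo those with $\lim_{n,\mathcal{U}}\|x_n\|=0$), $(x_n)_{n,\mathcal{U}}$ the class of $(x_n)$, and for $T\in B(X)$, $T^{\mathcal{U}}(x_n)_{n,\mathcal{U}}=(Tx_n)_{n,\mathcal{U}}$. $X$ is identified with constant classes. For reflexive $X$, $\widehat{X}=\{(x_n)_{n,\mathcal{U}}: w\text{-}\lim_{n,\mathcal{U}}x_n=0\}$, similarly for $\widehat{X^{*}}$. An ultrafilter $\mathcal{U}$ on $\mathbb{N}$ is selective if (1) for every sequence $A_1,A_2,\dots$ in $\mathcal{U}$ there is $A\in\mathcal{U}$ with $A\setminus A_k$ finite for each $k$; and (2) for every partition of $\mathbb{N}$ into finite sets $A_1,A_2,\dots$ there is $A\in\mathcal{U}$ with $A\cap A_k$ a singleton for each $k$. *)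

theory Defs
  imports "HOL-Analysis.Analysis"
begin

definition in_uf :: "nat filter \<Rightarrow> nat set \<Rightarrow> bool" where
  "in_uf U A \<longleftrightarrow> eventually (\<lambda>n. n \<in> A) U"

definition ultrafilter_nat :: "nat filter \<Rightarrow> bool" where
  "ultrafilter_nat U \<longleftrightarrow> U \<noteq> bot \<and> (\<forall>P. eventually P U \<or> eventually (\<lambda>n. \<not> P n) U)"

definition nonprincipal :: "nat filter \<Rightarrow> bool" where
  "nonprincipal U \<longleftrightarrow> (\<forall>n. \<not> in_uf U {n})"

definition selective :: "nat filter \<Rightarrow> bool" where
  "selective U \<longleftrightarrow>
     (\<forall>As :: nat \<Rightarrow> nat set. (\<forall>k. in_uf U (As k)) \<longrightarrow>
        (\<exists>A. in_uf U A \<and> (\<forall>k. finite (A - As k)))) \<and>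
     (\<forall>As :: nat \<Rightarrow> nat set.
        (\<forall>k. finite (As k) \<and> As k \<noteq> {}) \<and> (\<Union>k. As k) = UNIV \<and>
        (\<forall>k l. k \<noteq> l \<longrightarrow> As k \<inter> As l = {}) \<longrightarrow>
        (\<exists>A. in_uf U A \<and> (\<forall>k. \<exists>a. A \<inter> As k = {a})))"

definition reflexive_space :: "'a::real_normed_vector itself \<Rightarrow> bool" where
  "reflexive_space _ \<longleftrightarrow>
     (\<forall>\<Phi> :: ('a \<Rightarrow>\<^sub>L real) \<Rightarrow>\<^sub>L real. \<exists>x::'a. \<forall>f. blinfun_apply \<Phi> f = blinfun_apply f x)"

definition T_op :: "(nat \<Rightarrow> 'a::real_normed_vector) \<Rightarrow> (nat \<Rightarrow> ('a \<Rightarrow>\<^sub>L real)) \<Rightarrow> nat set \<Rightarrow> 'a \<Rightarrow> 'a" where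
  "T_op x xs A v = infsum (\<lambda>i. blinfun_apply (xs i) v *\<^sub>R x i) A"

end

theory Submission
  imports Defs
begin

lemma ultra_lim:
  fixes f :: "nat \<Rightarrow> 'b::t2_space"
  assumes U: "ultrafilter_nat U" and K: "compact K" and ev: "eventually (\<lambda>n. f n \<in> K) U"
  shows "\<exists>l\<in>K. (f \<longlongrightarrow> l) U"
proof -
  have nb: "filtermap f U \<noteq> bot" using U unfolding ultrafilter_nat_def by (simp add: filtermap_bot_iff)
  have "eventually (\<lambda>x. x \<in> K) (filtermap f U)" using ev by (simp add: eventually_filtermap)
  then obtain l where l: "l \<in> K" "inf (nhds l) (filtermap f U) \<noteq> bot"
    using K nb unfolding compact_filter by blast
  have "(f \<longlongrightarrow> l) U"
    unfolding tendsto_def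
  proof (intro allI impI)
    fix S :: "'b set" assume S: "open S" "l \<in> S"
    show "eventually (\<lambda>n. f n \<in> S) U"
    proof (rule ccontr)
      assume "\<not> eventually (\<lambda>n. f n \<in> S) U"
      then have "eventually (\<lambda>n. f n \<notin> S) U" using U unfolding ultrafilter_nat_def by blast
      then have e2: "eventually (\<lambda>x. x \<notin> S) (filtermap f U)" by (simp add: eventually_filtermap)
      have e1: "eventually (\<lambda>x. x \<in> S) (nhds l)" using S eventually_nhds by blast
      have "eventually (\<lambda>x. False) (inf (nhds l) (filtermap f U))"
        unfolding eventually_inf using e1 e2 by blast
      then show False using l(2) by (simp add: eventually_False)
    qed
  qed
  then show ?thesis using l by blast
qed

lemma uf_ge:
  assumes U: "ultrafilter_nat U" and np: "nonprincipal U"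
  shows "eventually (\<lambda>n. N \<le> n) U"
proof -
  have "\<forall>k\<in>{..<N}. eventually (\<lambda>n. n \<noteq> k) U"
  proof
    fix k
    have "\<not> eventually (\<lambda>n. n \<in> {k}) U" using np unfolding nonprincipal_def in_uf_def by blast
    then show "eventually (\<lambda>n. n \<noteq> k) U" using U unfolding ultrafilter_nat_def by force
  qed
  then have "eventually (\<lambda>n. \<forall>k\<in>{..<N}. n \<noteq> k) U"
    by (intro eventually_ball_finite) auto
  then show ?thesis by (rule eventually_mono) (auto simp: not_le)
qed

lemma tail_small:
  fixes g :: "nat \<Rightarrow> 'a::banach"
  assumes sg: "g summable_on UNIV" and e: "e > 0"
  shows "\<exists>N. \<forall>S \<subseteq> {N..}. norm (infsum g S) \<le> e"
proof -
  define s where "s = infsum g UNIV"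
  have "(sum g \<longlongrightarrow> s) (finite_subsets_at_top UNIV)"
    using sg unfolding s_def summable_iff_has_sum_infsum has_sum_def .
  then have "eventually (\<lambda>F. dist (sum g F) s < e/2) (finite_subsets_at_top UNIV)"
    using e by (intro tendstoD) auto
  then obtain F0 where F0: "finite F0" "\<And>Y. finite Y \<Longrightarrow> F0 \<subseteq> Y \<Longrightarrow> dist (sum g Y) s < e/2"
    unfolding eventually_finite_subsets_at_top by auto
  define N where "N = Suc (Max (insert 0 F0))"
  have F0N: "k < N" if "k \<in> F0" for k
    using F0(1) that unfolding N_def by (simp add: le_imp_less_Suc)
  show ?thesis
  proof (intro exI allI impI)
    fix S assume SN: "S \<subseteq> {N..}"
    have fin: "norm (sum g G) < e" if G: "finite G" "G \<subseteq> S" for G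
    proof -
      have disj: "F0 \<inter> G = {}" using G SN F0N by fastforce
      have "sum g (F0 \<union> G) = sum g F0 + sum g G" using disj F0(1) G(1) by (simp add: sum.union_disjoint)
      moreover have "dist (sum g (F0 \<union> G)) s < e/2" using F0 G by auto
      moreover have "dist (sum g F0) s < e/2" using F0 by auto
      ultimately show ?thesis
        by (smt (verit, ccfv_threshold) dist_commute dist_norm dist_triangle_half_r add_diff_cancel_left')
    qed
    have sS: "g summable_on S" using sg summable_on_subset_banach by blast
    show "norm (infsum g S) \<le> e"
    proof (rule field_le_epsilon)
      fix d :: real assume d: "d > 0"
      obtain G where G: "finite G" "G \<subseteq> S" "dist (sum g G) (infsum g S) \<le> d"
        using infsum_finite_approximation[OF sS d] by blast
      have "norm (infsum g S) \<le> norm (sum g G) + dist (sum g G) (infsum g S)"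
        by (metis dist_norm norm_triangle_sub norm_minus_commute)
      then show "norm (infsum g S) \<le> e + d" using fin[OF G(1,2)] G(3) by linarith
    qed
  qed
qed

lemma weak_lim:
  fixes y :: "nat \<Rightarrow> 'a::banach"
  assumes U: "ultrafilter_nat U" and R: "reflexive_space TYPE('a)" and b: "bounded (range y)"
  shows "\<exists>y0. \<forall>f::'a \<Rightarrow>\<^sub>L real. ((\<lambda>n. blinfun_apply f (y n)) \<longlongrightarrow> blinfun_apply f y0) U"
proof -
  obtain M where M: "M > 0" "\<And>n. norm (y n) \<le> M" using b unfolding bounded_pos by auto
  have ntriv: "\<not> trivial_limit U" using U unfolding ultrafilter_nat_def trivial_limit_def by simp
  define \<phi> where "\<phi> f = Lim U (\<lambda>n. blinfun_apply f (y n))" for f :: "'a \<Rightarrow>\<^sub>L real"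
  have conv: "((\<lambda>n. blinfun_apply f (y n)) \<longlongrightarrow> \<phi> f) U \<and> \<phi> f \<in> cball 0 (norm f * M)" for f
  proof -
    have "eventually (\<lambda>n. blinfun_apply f (y n) \<in> cball 0 (norm f * M)) U"
    proof (rule always_eventually, intro allI)
      fix n
      have "norm (blinfun_apply f (y n)) \<le> norm f * norm (y n)" by (rule norm_blinfun)
      also have "\<dots> \<le> norm f * M" using M(2)[of n] by (intro mult_left_mono) auto
      finally show "blinfun_apply f (y n) \<in> cball 0 (norm f * M)" by simp
    qed
    from ultra_lim[OF U compact_cball this] obtain l
      where l1: "l \<in> cball 0 (norm f * M)" and l2: "((\<lambda>n. blinfun_apply f (y n)) \<longlongrightarrow> l) U" by blast
    have "\<phi> f = l" unfolding \<phi>_def using l2 by (rule tendsto_Lim[OF ntriv])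
    then show ?thesis using l1 l2 by simp
  qed
  have "bounded_linear \<phi>"
  proof (rule bounded_linear_intro[where K=M])
    fix f g :: "'a \<Rightarrow>\<^sub>L real"
    have "((\<lambda>n. blinfun_apply (f + g) (y n)) \<longlongrightarrow> \<phi> f + \<phi> g) U"
      using conv[of f] conv[of g] by (simp add: blinfun.add_left tendsto_add)
    then show "\<phi> (f + g) = \<phi> f + \<phi> g" unfolding \<phi>_def by (rule tendsto_Lim[OF ntriv])
  next
    fix r :: real and f :: "'a \<Rightarrow>\<^sub>L real"
    have "((\<lambda>n. blinfun_apply (r *\<^sub>R f) (y n)) \<longlongrightarrow> r *\<^sub>R \<phi> f) U"
      using conv[of f] by (auto simp: blinfun.scaleR_left intro: tendsto_mult_left)
    then show "\<phi> (r *\<^sub>R f) = r *\<^sub>R \<phi> f" unfolding \<phi>_def by (rule tendsto_Lim[OF ntriv])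
  next
    fix f :: "'a \<Rightarrow>\<^sub>L real"
    show "norm (\<phi> f) \<le> norm f * M" using conv[of f] by simp
  qed
  then obtain y0 where y0: "\<forall>f. blinfun_apply (Blinfun \<phi>) f = blinfun_apply f y0"
    using R unfolding reflexive_space_def by blast
  have eq: "\<phi> f = blinfun_apply f y0" for f
    using y0 \<open>bounded_linear \<phi>\<close> by (simp add: bounded_linear_Blinfun_apply)
  show ?thesis
  proof (intro exI allI)
    fix f :: "'a \<Rightarrow>\<^sub>L real"
    show "((\<lambda>n. blinfun_apply f (y n)) \<longlongrightarrow> blinfun_apply f y0) U"
      using conv[of f] eq[of f] by simp
  qed
qed

lemma diag:
  assumes U: "ultrafilter_nat U" and sel: "selective U"
    and S: "\<And>a. in_uf U (S a)"
  shows "\<exists>A. in_uf U A \<and> (\<forall>a\<in>A. \<forall>b\<in>A. a < b \<longrightarrow> b \<in> S a)"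
proof -
  note sel1 = sel[unfolded selective_def, THEN conjunct1, rule_format]
  note sel2 = sel[unfolded selective_def, THEN conjunct2, rule_format]
  have "\<exists>A. in_uf U A \<and> (\<forall>k. finite (A - S k))" using S by (intro sel1) simp
  then obtain A0 where A0: "in_uf U A0" "\<And>k. finite (A0 - S k)" by blast
  define h where "h K = Suc (K + Max (insert 0 (\<Union>j\<le>K. A0 - S j)))" for K
  have hgt: "K < h K" for K unfolding h_def by simp
  have hprop: "b \<in> S a" if "a \<le> K" "h K \<le> b" "b \<in> A0" for a b K
  proof (rule ccontr)
    assume "b \<notin> S a"
    then have "b \<in> insert 0 (\<Union>j\<le>K. A0 - S j)" using that by auto
    moreover have "finite (insert 0 (\<Union>j\<le>K. A0 - S j))"
      by (intro finite.insertI finite_UN_I) (auto simp: A0(2))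
    ultimately have "b \<le> Max (insert 0 (\<Union>j\<le>K. A0 - S j))" by simp
    then show False using that(2) unfolding h_def by simp
  qed
  define t where "t = rec_nat 0 (\<lambda>_ v. h v)"
  have t0: "t 0 = 0" and tS: "t (Suc k) = h (t k)" for k unfolding t_def by simp_all
  have smt: "strict_mono t" unfolding strict_mono_Suc_iff using tS hgt by simp
  define I where "I k = {t k..<t (Suc k)}" for k
  have cover: "\<exists>k. n \<in> I k" for n
  proof (induction n)
    case 0
    have "t 0 < t (Suc 0)" using smt unfolding strict_mono_def by blast
    then show ?case using t0 unfolding I_def by (intro exI[of _ 0]) auto
  next
    case (Suc n)
    then obtain k where k: "t k \<le> n" "n < t (Suc k)" unfolding I_def by auto
    show ?case
    proof (cases "Suc n < t (Suc k)")
      case True then show ?thesis using k unfolding I_def by (intro exI[of _ k]) auto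
    next
      case False
      then have "Suc n = t (Suc k)" using k by simp
      moreover have "t (Suc k) < t (Suc (Suc k))" using smt unfolding strict_mono_def by simp
      ultimately show ?thesis unfolding I_def by (intro exI[of _ "Suc k"]) auto
    qed
  qed
  have Iuniq: "k = l" if "n \<in> I k" "n \<in> I l" for n k l
  proof (rule ccontr)
    assume "k \<noteq> l"
    then consider "Suc k \<le> l" | "Suc l \<le> k" by linarith
    then show False
    proof cases
      case 1 then have "t (Suc k) \<le> t l" using smt by (simp add: strict_mono_less_eq)
      then show False using that unfolding I_def by auto
    next
      case 2 then have "t (Suc l) \<le> t k" using smt by (simp add: strict_mono_less_eq)
      then show False using that unfolding I_def by auto
    qed
  qed
  have "\<exists>A. in_uf U A \<and> (\<forall>k. \<exists>a. A \<inter> I k = {a})"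
  proof -
    have "(\<forall>k. finite (I k) \<and> I k \<noteq> {}) \<and> (\<Union>k. I k) = UNIV \<and> (\<forall>k l. k \<noteq> l \<longrightarrow> I k \<inter> I l = {})"
    proof (intro conjI allI impI)
      fix k
      have "t k < t (Suc k)" using smt unfolding strict_mono_def by blast
      then show "finite (I k)" "I k \<noteq> {}" unfolding I_def by auto
    next
      show "(\<Union>k. I k) = UNIV" using cover by blast
    next
      fix k l :: nat assume "k \<noteq> l"
      then show "I k \<inter> I l = {}" using Iuniq by blast
    qed
    then show ?thesis by (rule sel2)
  qed
  then obtain A1 where A1: "in_uf U A1" "\<And>k. \<exists>a. A1 \<inter> I k = {a}" by blast
  define idx where "idx n = (SOME k. n \<in> I k)" for n
  have idx: "n \<in> I (idx n)" for n unfolding idx_def using cover by (rule someI_ex)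
  have "eventually (\<lambda>n. even (idx n)) U \<or> eventually (\<lambda>n. \<not> even (idx n)) U"
    using U[unfolded ultrafilter_nat_def, THEN conjunct2, rule_format, of "\<lambda>n. even (idx n)"] by simp
  then obtain p where p: "eventually (\<lambda>n. even (idx n) = p) U"
  proof
    assume "eventually (\<lambda>n. even (idx n)) U"
    then have "eventually (\<lambda>n. even (idx n) = True) U" by simp
    then show ?thesis by (rule that)
  next
    assume "eventually (\<lambda>n. \<not> even (idx n)) U"
    then have "eventually (\<lambda>n. even (idx n) = False) U" by simp
    then show ?thesis by (rule that)
  qed
  define A where "A = A0 \<inter> A1 \<inter> {n. even (idx n) = p}"
  have "eventually (\<lambda>n. n \<in> A0 \<and> n \<in> A1 \<and> even (idx n) = p) U"
    using A0(1) A1(1) p unfolding in_uf_def by (intro eventually_conj) auto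
  then have "in_uf U A" unfolding A_def in_uf_def by simp
  moreover have "b \<in> S a" if ab: "a \<in> A" "b \<in> A" "a < b" for a b
  proof -
    define k where "k = idx a"
    define l where "l = idx b"
    have ak: "a \<in> I k" and bl: "b \<in> I l" using idx k_def l_def by auto
    have "k \<le> l"
    proof (rule ccontr)
      assume "\<not> k \<le> l"
      then have "t (Suc l) \<le> t k" using smt by (simp add: strict_mono_less_eq)
      then show False using ak bl ab(3) unfolding I_def by auto
    qed
    moreover have "k \<noteq> l"
    proof
      assume "k = l"
      obtain c where c: "A1 \<inter> I k = {c}" using A1(2) by blast
      have "a \<in> A1 \<inter> I k" "b \<in> A1 \<inter> I k" using ak bl ab \<open>k = l\<close> unfolding A_def by auto
      then have "a = c" "b = c" using c by auto
      then show False using ab(3) by simp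
    qed
    moreover have "even k = even l" using ab unfolding A_def k_def l_def by auto
    ultimately have "Suc (Suc k) \<le> l"
    proof -
      assume kl: "k \<le> l" "k \<noteq> l" "even k = even l"
      have "l \<noteq> Suc k" using kl(3) by auto
      then show ?thesis using kl(1,2) by linarith
    qed
    then have "t (Suc (Suc k)) \<le> t l" using smt by (simp add: strict_mono_less_eq)
    then have "h (t (Suc k)) \<le> b" using bl tS unfolding I_def by auto
    moreover have "a \<le> t (Suc k)" using ak unfolding I_def by auto
    moreover have "b \<in> A0" using ab(2) unfolding A_def by simp
    ultimately show ?thesis using hprop[of a "t (Suc k)" b] by simp
  qed
  ultimately show ?thesis by blast
qed


lemma geom_le:
  assumes "(e::real) \<ge> 0"
  shows "(\<Sum>i<n. e / 2 ^ Suc i) \<le> e"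
proof -
  have g: "(\<Sum>i<n. (1::real) / 2 ^ Suc i) = 1 - 1 / 2 ^ n"
    by (induction n) (simp_all add: field_simps)
  have "(\<Sum>i<n. e / 2 ^ Suc i) = e * (\<Sum>i<n. (1::real) / 2 ^ Suc i)"
    by (simp add: sum_distrib_left)
  also have "\<dots> = e * (1 - 1 / 2 ^ n)" using g by simp
  also have "\<dots> = e - e / 2 ^ n" by (simp add: right_diff_distrib)
  also have "\<dots> \<le> e" using assms by simp
  finally show ?thesis .
qed

theorem lemma4p3:
  fixes U :: "nat filter"
    and x :: "nat \<Rightarrow> 'a::banach"
    and xs :: "nat \<Rightarrow> ('a \<Rightarrow>\<^sub>L real)"
  assumes "ultrafilter_nat U" and "nonprincipal U" and "selective U"
    and "reflexive_space TYPE('a)"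
    and "bounded (range x)" and "bounded (range xs)"
    and "\<forall>f :: 'a \<Rightarrow>\<^sub>L real. ((\<lambda>n. blinfun_apply f (x n)) \<longlongrightarrow> 0) U"
    and "\<forall>\<Phi> :: ('a \<Rightarrow>\<^sub>L real) \<Rightarrow>\<^sub>L real. ((\<lambda>n. blinfun_apply \<Phi> (xs n)) \<longlongrightarrow> 0) U"
    and "\<forall>v. (\<lambda>i. blinfun_apply (xs i) v *\<^sub>R x i) summable_on UNIV"
  shows "\<forall>y :: nat \<Rightarrow> 'a. bounded (range y) \<longrightarrow>
           (\<forall>\<epsilon>>0. \<exists>B. in_uf U B \<and>
              (\<forall>A. in_uf U A \<and> A \<subseteq> B \<longrightarrow>
                 Lim U (\<lambda>n. norm (T_op x xs A (y n)
                     - Lim U (\<lambda>m. blinfun_apply (xs m) (y m)) *\<^sub>R x n)) < \<epsilon>))"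
proof (intro allI impI)
  fix y :: "nat \<Rightarrow> 'a" assume hy: "bounded (range y)"
  fix \<epsilon> :: real assume \<epsilon>: "\<epsilon> > 0"
  have ntriv: "\<not> trivial_limit U" using assms(1) unfolding ultrafilter_nat_def trivial_limit_def by simp
  obtain Mx where Mx: "Mx > 0" "\<And>i. norm (x i) \<le> Mx" using assms(5) unfolding bounded_pos by auto
  obtain Mxs where Mxs: "Mxs > 0" "\<And>i. norm (xs i) \<le> Mxs" using assms(6) unfolding bounded_pos by auto
  obtain My where My: "My > 0" "\<And>i. norm (y i) \<le> My" using hy unfolding bounded_pos by auto
  define e where "e = \<epsilon> / 5"
  have e: "e > 0" using \<epsilon> unfolding e_def by simp
  obtain y0 where y0: "\<forall>f::'a \<Rightarrow>\<^sub>L real. ((\<lambda>n. blinfun_apply f (y n)) \<longlongrightarrow> blinfun_apply f y0) U"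
    using weak_lim[OF assms(1) assms(4) hy] by blast
  define g where "g v i = blinfun_apply (xs i) v *\<^sub>R x i" for v i
  have sg: "g v summable_on UNIV" for v using assms(9) unfolding g_def by blast
  have sgC: "g v summable_on C" for v C using summable_on_subset_banach[OF sg] by blast
  obtain N0 where N0: "\<forall>S\<subseteq>{N0..}. norm (infsum (g y0) S) \<le> e" using tail_small[OF sg e] by blast
  have "\<forall>a. \<exists>N. \<forall>S\<subseteq>{N..}. norm (infsum (g (y a)) S) \<le> e" using tail_small[OF sg e] by blast
  then obtain N where N: "\<And>a S. S \<subseteq> {N a..} \<Longrightarrow> norm (infsum (g (y a)) S) \<le> e" by metis
  define S where "S a = {b. \<bar>blinfun_apply (xs a) (y b) - blinfun_apply (xs a) y0\<bar> * Mx \<le> e / 2 ^ Suc a \<and> N a \<le> b}" for a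
  have SU: "in_uf U (S a)" for a
  proof -
    have t: "((\<lambda>b. blinfun_apply (xs a) (y b)) \<longlongrightarrow> blinfun_apply (xs a) y0) U" using y0 by simp
    have "((\<lambda>b. \<bar>blinfun_apply (xs a) (y b) - blinfun_apply (xs a) y0\<bar> * Mx) \<longlongrightarrow>
        \<bar>blinfun_apply (xs a) y0 - blinfun_apply (xs a) y0\<bar> * Mx) U"
      by (intro tendsto_mult_right tendsto_rabs tendsto_diff t tendsto_const)
    then have "((\<lambda>b. \<bar>blinfun_apply (xs a) (y b) - blinfun_apply (xs a) y0\<bar> * Mx) \<longlongrightarrow> 0) U" by simp
    then have "eventually (\<lambda>b. \<bar>blinfun_apply (xs a) (y b) - blinfun_apply (xs a) y0\<bar> * Mx < e / 2 ^ Suc a) U"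
      by (rule order_tendstoD(2)) (simp add: e)
    moreover have "eventually (\<lambda>b. N a \<le> b) U" by (rule uf_ge[OF assms(1,2)])
    ultimately have "eventually (\<lambda>b. \<bar>blinfun_apply (xs a) (y b) - blinfun_apply (xs a) y0\<bar> * Mx < e / 2 ^ Suc a \<and> N a \<le> b) U"
      by (rule eventually_conj)
    then show ?thesis unfolding in_uf_def S_def by (rule eventually_mono) auto
  qed
  have "\<exists>A. in_uf U A \<and> (\<forall>a\<in>A. \<forall>b\<in>A. a < b \<longrightarrow> b \<in> S a)"
    by (rule diag[OF assms(1,3) SU])
  then obtain Ad where Ad: "in_uf U Ad" "\<forall>a\<in>Ad. \<forall>b\<in>Ad. a < b \<longrightarrow> b \<in> S a"
    by blast
  define B where "B = Ad \<inter> {N0..}"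
  have "eventually (\<lambda>n. n \<in> Ad \<and> N0 \<le> n) U"
    by (intro eventually_conj Ad(1)[unfolded in_uf_def] uf_ge[OF assms(1,2)])
  then have BU: "in_uf U B" unfolding B_def in_uf_def by simp
  define L where "L = Lim U (\<lambda>m. blinfun_apply (xs m) (y m))"
  have "eventually (\<lambda>m. blinfun_apply (xs m) (y m) \<in> cball 0 (Mxs * My)) U"
  proof (rule always_eventually, intro allI)
    fix m
    have "norm (blinfun_apply (xs m) (y m)) \<le> norm (xs m) * norm (y m)" by (rule norm_blinfun)
    also have "\<dots> \<le> Mxs * My" using Mxs My by (intro mult_mono) auto
    finally show "blinfun_apply (xs m) (y m) \<in> cball 0 (Mxs * My)" by simp
  qed
  from ultra_lim[OF assms(1) compact_cball this] obtain l
    where l: "((\<lambda>m. blinfun_apply (xs m) (y m)) \<longlongrightarrow> l) U" by blast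
  have "L = l" unfolding L_def using l by (rule tendsto_Lim[OF ntriv])
  with l have Lt: "((\<lambda>m. blinfun_apply (xs m) (y m)) \<longlongrightarrow> L) U" by simp
  show "\<exists>B. in_uf U B \<and>
              (\<forall>A. in_uf U A \<and> A \<subseteq> B \<longrightarrow>
                 Lim U (\<lambda>n. norm (T_op x xs A (y n)
                     - Lim U (\<lambda>m. blinfun_apply (xs m) (y m)) *\<^sub>R x n)) < \<epsilon>)"
    unfolding L_def[symmetric]
  proof (intro exI conjI allI impI)
    show "in_uf U B" by (rule BU)
    fix A assume A: "in_uf U A \<and> A \<subseteq> B"
    have key: "norm (T_op x xs A (y n) - L *\<^sub>R x n) \<le> 3 * e + \<bar>blinfun_apply (xs n) (y n) - L\<bar> * Mx"
      if nA: "n \<in> A" for n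
    proof -
      define G where "G = g (y n)"
      define F where "F = A \<inter> {..<n}"
      define R where "R = A \<inter> {n<..}"
      define D where "D i = (blinfun_apply (xs i) (y n) - blinfun_apply (xs i) y0) *\<^sub>R x i" for i
      have finF: "finite F" unfolding F_def by simp
      have Adec: "A = F \<union> ({n} \<union> R)" using nA unfolding F_def R_def by auto
      have "infsum G A = infsum G F + infsum G ({n} \<union> R)"
        unfolding Adec G_def by (rule infsum_Un_disjoint[OF sgC sgC]) (auto simp: F_def R_def)
      also have "infsum G ({n} \<union> R) = infsum G {n} + infsum G R"
        unfolding G_def by (rule infsum_Un_disjoint[OF sgC sgC]) (auto simp: R_def)
      finally have eq1: "infsum G A = sum G F + G n + infsum G R" using finF by simp
      have eq2: "sum G F = sum D F + sum (g y0) F"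
      proof -
        have "G i = D i + g y0 i" for i unfolding G_def g_def D_def by (simp add: scaleR_diff_left)
        then have "sum G F = (\<Sum>i\<in>F. D i + g y0 i)" by simp
        then show ?thesis by (simp add: sum.distrib)
      qed
      have T: "T_op x xs A (y n) - L *\<^sub>R x n = sum D F + sum (g y0) F + (G n - L *\<^sub>R x n) + infsum G R"
      proof -
        have Teq: "T_op x xs A (y n) = infsum G A" unfolding T_op_def G_def g_def by simp
        show ?thesis by (simp only: Teq eq1 eq2) (simp add: algebra_simps)
      qed
      have AB: "A \<subseteq> B" using A by simp
      have n1: "norm (sum (g y0) F) \<le> e"
      proof -
        have "F \<subseteq> {N0..}" using AB unfolding F_def B_def by auto
        then have "norm (infsum (g y0) F) \<le> e" using N0 by blast
        then show ?thesis using finF by simp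
      qed
      have n2: "norm (infsum G R) \<le> e"
      proof -
        have "R \<subseteq> {N n..}"
        proof
          fix i assume "i \<in> R"
          then have "i \<in> Ad" "n < i" "n \<in> Ad" using AB nA unfolding R_def B_def by auto
          then have "i \<in> S n" using Ad(2) by blast
          then show "i \<in> {N n..}" unfolding S_def by simp
        qed
        then show ?thesis unfolding G_def by (rule N)
      qed
      have n3: "norm (sum D F) \<le> e"
      proof -
        have "norm (sum D F) \<le> (\<Sum>i\<in>F. norm (D i))" by (rule norm_sum)
        also have "\<dots> \<le> (\<Sum>i\<in>F. e / 2 ^ Suc i)"
        proof (rule sum_mono)
          fix i assume "i \<in> F"
          then have "i \<in> Ad" "i < n" "n \<in> Ad" using AB nA unfolding F_def B_def by auto
          then have "n \<in> S i" using Ad(2) by blast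
          then have s: "\<bar>blinfun_apply (xs i) (y n) - blinfun_apply (xs i) y0\<bar> * Mx \<le> e / 2 ^ Suc i"
            unfolding S_def by simp
          have "norm (D i) = \<bar>blinfun_apply (xs i) (y n) - blinfun_apply (xs i) y0\<bar> * norm (x i)"
            unfolding D_def by simp
          also have "\<dots> \<le> \<bar>blinfun_apply (xs i) (y n) - blinfun_apply (xs i) y0\<bar> * Mx"
            using Mx(2)[of i] by (intro mult_left_mono) auto
          finally show "norm (D i) \<le> e / 2 ^ Suc i" using s by linarith
        qed
        also have "\<dots> \<le> (\<Sum>i<n. e / 2 ^ Suc i)"
          by (rule sum_mono2) (use e in \<open>auto simp: F_def\<close>)
        also have "\<dots> \<le> e" using geom_le e by simp
        finally show ?thesis .
      qed
      have n4: "norm (G n - L *\<^sub>R x n) \<le> \<bar>blinfun_apply (xs n) (y n) - L\<bar> * Mx"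
      proof -
        have "G n - L *\<^sub>R x n = (blinfun_apply (xs n) (y n) - L) *\<^sub>R x n"
          unfolding G_def g_def by (simp add: scaleR_left_diff_distrib)
        then have "norm (G n - L *\<^sub>R x n) = \<bar>blinfun_apply (xs n) (y n) - L\<bar> * norm (x n)" by simp
        also have "\<dots> \<le> \<bar>blinfun_apply (xs n) (y n) - L\<bar> * Mx" using Mx(2)[of n] by (intro mult_left_mono) auto
        finally show ?thesis .
      qed
      have tri: "norm (sum D F + sum (g y0) F + (G n - L *\<^sub>R x n) + infsum G R)
          \<le> norm (sum D F) + norm (sum (g y0) F) + norm (G n - L *\<^sub>R x n) + norm (infsum G R)"
        using norm_triangle_ineq[of "sum D F + sum (g y0) F + (G n - L *\<^sub>R x n)" "infsum G R"]
          norm_triangle_ineq[of "sum D F + sum (g y0) F" "G n - L *\<^sub>R x n"]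
          norm_triangle_ineq[of "sum D F" "sum (g y0) F"] by linarith
      show ?thesis unfolding T using tri n1 n2 n3 n4 by linarith
    qed
    have "((\<lambda>n. \<bar>blinfun_apply (xs n) (y n) - L\<bar> * Mx) \<longlongrightarrow> \<bar>L - L\<bar> * Mx) U"
      by (intro tendsto_mult_right tendsto_rabs tendsto_diff Lt tendsto_const)
    then have "((\<lambda>n. \<bar>blinfun_apply (xs n) (y n) - L\<bar> * Mx) \<longlongrightarrow> 0) U" by simp
    then have "eventually (\<lambda>n. \<bar>blinfun_apply (xs n) (y n) - L\<bar> * Mx < e) U"
      by (rule order_tendstoD(2)) (rule e)
    moreover have "eventually (\<lambda>n. n \<in> A) U" using A unfolding in_uf_def by simp
    ultimately have "eventually (\<lambda>n. \<bar>blinfun_apply (xs n) (y n) - L\<bar> * Mx < e \<and> n \<in> A) U"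
      by (rule eventually_conj)
    then have "eventually (\<lambda>n. norm (T_op x xs A (y n) - L *\<^sub>R x n) \<in> {0..4 * e}) U"
    proof (rule eventually_mono)
      fix n assume "\<bar>blinfun_apply (xs n) (y n) - L\<bar> * Mx < e \<and> n \<in> A"
      then show "norm (T_op x xs A (y n) - L *\<^sub>R x n) \<in> {0..4 * e}" using key[of n] by auto
    qed
    from ultra_lim[OF assms(1) compact_Icc this] obtain l2
      where l2: "l2 \<in> {0..4 * e}" "((\<lambda>n. norm (T_op x xs A (y n) - L *\<^sub>R x n)) \<longlongrightarrow> l2) U" by blast
    have "Lim U (\<lambda>n. norm (T_op x xs A (y n) - L *\<^sub>R x n)) = l2"
      using l2(2) by (rule tendsto_Lim[OF ntriv])
    then show "Lim U (\<lambda>n. norm (T_op x xs A (y n) - L *\<^sub>R x n)) < \<epsilon>"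
      using l2(1) e unfolding e_def by simp
  qed
qed

end
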